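(* Let $\boldsymbol{y}_1,\boldsymbol{y}_2,\boldsymbol{\lambda}_1,\boldsymbol{\lambda}_2\in\mathbb{R}^p$, where $\{\lambda_{1,i}\}_{1\le i\le p}$ and $\{\lambda_{2,i}\}_{1\le i\le p}$ are non-negative non-decreasing sequences. Then \[ \|\mathrm{Prox}_{\boldsymbol{\lambda}_1}(\boldsymbol{y}_1)-\mathrm{Prox}_{\boldsymbol{\lambda}_2}(\boldsymbol{y}_2)\|_2\le2\big(\|\boldsymbol{\lambda}_1-\boldsymbol{\lambda}_2\|_2+\|\boldsymbol{y}_1-\boldsymbol{y}_2\|_2\big). \]
   Context: For $\boldsymbol y\in\mathbb{R}^p$ and $0\le\lambda_1\le\cdots\le\lambda_p$, $\mathrm{Prox}_{\boldsymbol{\lambda}}(\boldsymbol{y})=\arg\min_{\boldsymbol{x}\in\mathbb{R}^p}\frac12\|\boldsymbol{y}-\boldsymbol{x}\|_2^2+\sum_{i=1}^p\lambda_i|x|_{(i)}$, where $|x|_{(1)}\le\cdots\le|x|_{(p)}$ is the increasing rearrangement of $|x_1|,\dots,|x_p|$. *)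

theory Defs
  imports Complex_Main
begin

text \<open>Vectors in R^p are represented as real lists of length p (index i-1 of the
list is coordinate i). The increasing rearrangement of |x_1|,...,|x_p| is
sort (map abs x).\<close>

definition norm2 :: "real list \<Rightarrow> real" where
  "norm2 v = sqrt (\<Sum>i<length v. (v ! i)^2)"

definition vdiff :: "real list \<Rightarrow> real list \<Rightarrow> real list" where
  "vdiff u v = map2 (-) u v"

definition sorted_l1 :: "real list \<Rightarrow> real list \<Rightarrow> real" where
  "sorted_l1 lam x = (\<Sum>i<length x. lam ! i * (sort (map abs x)) ! i)"

definition slope_obj :: "real list \<Rightarrow> real list \<Rightarrow> real list \<Rightarrow> real" where
  "slope_obj lam y x = 1/2 * (norm2 (vdiff y x))^2 + sorted_l1 lam x"

definition Prox :: "real list \<Rightarrow> real list \<Rightarrow> real list" where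
  "Prox lam y = (THE x. length x = length y \<and>
      (\<forall>z. length z = length y \<longrightarrow> slope_obj lam y x \<le> slope_obj lam y z))"

end

theory Submission imports Defs "HOL-Analysis.L2_Norm" "HOL-Combinatorics.Permutations"
begin

lemma sum_list_nth_sum: "sum_list xs = (\<Sum>i<length xs. xs ! i)"
  by (simp add: sum_list_sum_nth atLeast0LessThan)

lemma take_insort_le:
  assumes "sorted s" "k \<ge> 1"
  shows "sum_list (take k (insort (x::real) s)) \<le> x + sum_list (take (k - 1) s)"
  using assms
proof (induction s arbitrary: k)
  case Nil
  then show ?case by (cases k) auto
next
  case (Cons y s)
  show ?case
  proof (cases "x \<le> y")
    case True
    then show ?thesis using Cons.prems by (cases k) auto
  next
    case False
    show ?thesis
    proof (cases "k = 1")
      case True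
      then show ?thesis using False by simp
    next
      case k: False
      then obtain k' where k': "k = Suc (Suc k')" using Cons.prems
        by (metis One_nat_def Suc_le_D le_SucE not_less_eq_eq)
      have "sum_list (take (k' + 1) (insort x s)) \<le> x + sum_list (take k' s)"
        using Cons.IH[of "k'+1"] Cons.prems by simp
      then show ?thesis using False k' by simp
    qed
  qed
qed

lemma take_sort_le: "sum_list (take k (sort (b::real list))) \<le> sum_list (take k b)"
proof (induction b arbitrary: k)
  case Nil
  then show ?case by simp
next
  case (Cons x b)
  show ?case
  proof (cases k)
    case 0
    then show ?thesis by simp
  next
    case (Suc k')
    have "sum_list (take k (insort x (sort b))) \<le> x + sum_list (take k' (sort b))"
      using take_insort_le[of "sort b" k x] Suc by simp
    also have "\<dots> \<le> x + sum_list (take k' b)" using Cons.IH[of k'] by simp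
    finally show ?thesis using Suc by simp
  qed
qed

lemma abel_le:
  fixes a d :: "nat \<Rightarrow> real"
  assumes "\<And>i j. i \<le> j \<Longrightarrow> j < n \<Longrightarrow> a i \<le> a j"
    and "\<And>k. k \<le> n \<Longrightarrow> 0 \<le> (\<Sum>i<k. d i)"
  shows "(\<Sum>i<n. a i * d i) \<le> a (n - 1) * (\<Sum>i<n. d i)"
  using assms
proof (induction n)
  case 0
  then show ?case by simp
next
  case (Suc n)
  have IH: "(\<Sum>i<n. a i * d i) \<le> a (n - 1) * (\<Sum>i<n. d i)"
    using Suc.IH Suc.prems by auto
  have "a (n - 1) \<le> a n" using Suc.prems(1)[of "n-1" n] by simp
  moreover have "0 \<le> (\<Sum>i<n. d i)" using Suc.prems(2)[of n] by simp
  ultimately have "a (n - 1) * (\<Sum>i<n. d i) \<le> a n * (\<Sum>i<n. d i)"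
    by (simp add: mult_right_mono)
  with IH show ?case by (simp add: distrib_left)
qed

lemma rearr:
  fixes lam b :: "real list"
  assumes "sorted lam" "length lam = n" "length b = n"
  shows "(\<Sum>i<n. lam ! i * b ! i) \<le> (\<Sum>i<n. lam ! i * sort b ! i)"
proof -
  define d where "d i = b ! i - sort b ! i" for i
  have ps: "(\<Sum>i<k. d i) = sum_list (take k b) - sum_list (take k (sort b))" if "k \<le> n" for k
    using that assms by (simp add: d_def sum_subtractf sum_list_nth_sum min_def)
  have "(\<Sum>i<n. lam ! i * d i) \<le> lam ! (n - 1) * (\<Sum>i<n. d i)"
    apply (rule abel_le)
    using assms(1,2) apply (simp add: sorted_iff_nth_mono)
    using ps take_sort_le by simp
  also have "(\<Sum>i<n. d i) = 0" using ps[of n] assms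
    by (simp add: sum_mset_sum_list[symmetric])
  finally show ?thesis by (simp add: d_def algebra_simps sum_subtractf)
qed


definition SA :: "real list \<Rightarrow> real list" where "SA x = sort (map abs x)"

lemma length_SA[simp]: "length (SA x) = length x" by (simp add: SA_def)

lemma sorted_SA: "sorted (SA x)" by (simp add: SA_def)

lemma perm_SA:
  assumes "length x = p"
  obtains \<pi> where "\<pi> permutes {..<p}" "\<And>i. i < p \<Longrightarrow> SA x ! i = \<bar>x ! \<pi> i\<bar>"
proof -
  have "mset (SA x) = mset (map abs x)" by (simp add: SA_def)
  then obtain \<pi> where "\<pi> permutes {..<length (map abs x)}" "permute_list \<pi> (map abs x) = SA x"
    using mset_eq_permutation by blast
  moreover have "\<And>i. i < p \<Longrightarrow> SA x ! i = \<bar>x ! \<pi> i\<bar>"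
  proof -
    fix i assume i: "i < p"
    have "\<pi> i < p" using \<open>\<pi> permutes _\<close> i assms permutes_in_image by fastforce
    then show "SA x ! i = \<bar>x ! \<pi> i\<bar>"
      using permute_list_nth[OF \<open>\<pi> permutes _\<close>] i assms \<open>permute_list \<pi> (map abs x) = SA x\<close>
      by (metis length_map nth_map)
  qed
  ultimately show ?thesis using that assms by simp
qed

lemma J_ge:
  assumes "sorted lam" "length lam = p" "length z = p" "\<pi> permutes {..<p}"
  shows "(\<Sum>i<p. lam ! i * \<bar>z ! \<pi> i\<bar>) \<le> (\<Sum>i<p. lam ! i * SA z ! i)"
proof -
  define b where "b = permute_list \<pi> (map abs z)"
  have lb: "length b = p" using assms by (simp add: b_def)
  have bn: "\<And>i. i < p \<Longrightarrow> b ! i = \<bar>z ! \<pi> i\<bar>"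
  proof -
    fix i assume i: "i < p"
    have "\<pi> i < p" using assms(4) i permutes_in_image by fastforce
    then show "b ! i = \<bar>z ! \<pi> i\<bar>" using assms i by (simp add: b_def permute_list_nth)
  qed
  have "sort b = SA z" unfolding SA_def b_def
    by (rule properties_for_sort) (use assms in auto)
  then show ?thesis using rearr[OF assms(1,2) lb] bn by simp
qed

lemma sorted_l1_eq: "length x = p \<Longrightarrow> sorted_l1 lam x = (\<Sum>i<p. lam ! i * SA x ! i)"
  by (simp add: sorted_l1_def SA_def)

definition comb :: "real \<Rightarrow> real list \<Rightarrow> real list \<Rightarrow> real list" where
  "comb t x z = map2 (\<lambda>a b. t * a + (1 - t) * b) x z"

lemma length_comb[simp]: "length (comb t x z) = min (length x) (length z)"
  by (simp add: comb_def)

lemma nth_comb[simp]: "i < length x \<Longrightarrow> i < length z \<Longrightarrow> comb t x z ! i = t * x ! i + (1 - t) * z ! i"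
  by (simp add: comb_def)

lemma J_convex:
  assumes "sorted lam" "length lam = p" "\<forall>i<p. 0 \<le> lam ! i"
    "length x = p" "length z = p" "0 \<le> t" "t \<le> 1"
  shows "sorted_l1 lam (comb t x z) \<le> t * sorted_l1 lam x + (1 - t) * sorted_l1 lam z"
proof -
  let ?w = "comb t x z"
  have lw: "length ?w = p" using assms by simp
  obtain \<pi> where pi: "\<pi> permutes {..<p}" "\<And>i. i < p \<Longrightarrow> SA ?w ! i = \<bar>?w ! \<pi> i\<bar>"
    using perm_SA[OF lw] by blast
  have pin: "\<And>i. i < p \<Longrightarrow> \<pi> i < p" using pi(1) permutes_in_image by fastforce
  have "sorted_l1 lam ?w = (\<Sum>i<p. lam ! i * \<bar>?w ! \<pi> i\<bar>)"
    using lw pi by (simp add: sorted_l1_eq)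
  also have "\<dots> \<le> (\<Sum>i<p. t * (lam ! i * \<bar>x ! \<pi> i\<bar>) + (1 - t) * (lam ! i * \<bar>z ! \<pi> i\<bar>))"
  proof (rule sum_mono)
    fix i assume "i \<in> {..<p}"
    then have i: "i < p" by simp
    have "\<bar>t * x ! \<pi> i + (1 - t) * z ! \<pi> i\<bar> \<le> t * \<bar>x ! \<pi> i\<bar> + (1 - t) * \<bar>z ! \<pi> i\<bar>"
      using assms(6,7) abs_triangle_ineq[of "t * x ! \<pi> i" "(1 - t) * z ! \<pi> i"]
      by (simp add: abs_mult)
    then have "lam ! i * \<bar>t * x ! \<pi> i + (1 - t) * z ! \<pi> i\<bar> \<le> lam ! i * (t * \<bar>x ! \<pi> i\<bar> + (1 - t) * \<bar>z ! \<pi> i\<bar>)"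
      using assms(3) i by (simp add: mult_left_mono)
    then show "lam ! i * \<bar>?w ! \<pi> i\<bar> \<le> t * (lam ! i * \<bar>x ! \<pi> i\<bar>) + (1 - t) * (lam ! i * \<bar>z ! \<pi> i\<bar>)"
      using pin[OF i] assms(4,5) by (simp add: algebra_simps)
  qed
  also have "\<dots> = t * (\<Sum>i<p. lam ! i * \<bar>x ! \<pi> i\<bar>) + (1 - t) * (\<Sum>i<p. lam ! i * \<bar>z ! \<pi> i\<bar>)"
    by (simp add: sum.distrib sum_distrib_left)
  also have "\<dots> \<le> t * sorted_l1 lam x + (1 - t) * sorted_l1 lam z"
    using J_ge[OF assms(1,2,4) pi(1)] J_ge[OF assms(1,2,5) pi(1)] assms
    by (simp add: sorted_l1_eq add_mono mult_left_mono)
  finally show ?thesis .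
qed

lemma sum_sq_SA: "length x = p \<Longrightarrow> (\<Sum>i<p. (SA x ! i)^2) = (\<Sum>i<p. (x ! i)^2)"
proof -
  assume l: "length x = p"
  have "(\<Sum>i<p. (SA x ! i)^2) = sum_list (map (\<lambda>v. v^2) (SA x))"
    using l by (simp add: sum_list_nth_sum)
  also have "\<dots> = sum_list (map (\<lambda>v. v^2) (map abs x))"
    unfolding SA_def by (metis mset_map mset_sort sum_mset_sum_list)
  also have "\<dots> = (\<Sum>i<p. (x ! i)^2)" using l by (simp add: sum_list_nth_sum)
  finally show ?thesis .
qed

lemma SA_nonexp:
  assumes "length x = p" "length z = p"
  shows "(\<Sum>i<p. (SA x ! i - SA z ! i)^2) \<le> (\<Sum>i<p. (x ! i - z ! i)^2)"
proof -
  obtain \<pi> where pi: "\<pi> permutes {..<p}" "\<And>i. i < p \<Longrightarrow> SA x ! i = \<bar>x ! \<pi> i\<bar>"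
    using perm_SA[OF assms(1)] by blast
  have "(\<Sum>i<p. x ! i * z ! i) \<le> (\<Sum>i<p. \<bar>x ! i\<bar> * \<bar>z ! i\<bar>)"
    by (rule sum_mono) (simp add: abs_mult[symmetric])
  also have "\<dots> = (\<Sum>i<p. \<bar>x ! \<pi> i\<bar> * \<bar>z ! \<pi> i\<bar>)"
    using sum.permute[OF pi(1), of "\<lambda>i. \<bar>x ! i\<bar> * \<bar>z ! i\<bar>"] by simp
  also have "\<dots> = (\<Sum>i<p. SA x ! i * \<bar>z ! \<pi> i\<bar>)" using pi(2) by simp
  also have "\<dots> \<le> (\<Sum>i<p. SA x ! i * SA z ! i)"
    using J_ge[OF sorted_SA _ assms(2) pi(1)] assms by simp
  finally have c: "(\<Sum>i<p. x ! i * z ! i) \<le> (\<Sum>i<p. SA x ! i * SA z ! i)" .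
  have e1: "(\<Sum>i<p. (SA x ! i - SA z ! i)^2) = (\<Sum>i<p. (SA x ! i)^2) + (\<Sum>i<p. (SA z ! i)^2) - 2 * (\<Sum>i<p. SA x ! i * SA z ! i)"
    by (simp add: power2_diff sum.distrib sum_subtractf sum_distrib_left mult.assoc)
  have e2: "(\<Sum>i<p. (x ! i - z ! i)^2) = (\<Sum>i<p. (x ! i)^2) + (\<Sum>i<p. (z ! i)^2) - 2 * (\<Sum>i<p. x ! i * z ! i)"
    by (simp add: power2_diff sum.distrib sum_subtractf sum_distrib_left mult.assoc)
  show ?thesis using e1 e2 c sum_sq_SA[OF assms(1)] sum_sq_SA[OF assms(2)] by linarith
qed


definition dd :: "nat \<Rightarrow> real list \<Rightarrow> real list \<Rightarrow> real" where
  "dd p a b = (\<Sum>i<p. (a ! i - b ! i)^2)"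

lemma dd_nonneg: "0 \<le> dd p a b" by (simp add: dd_def sum_nonneg)

lemma dd_sym: "dd p a b = dd p b a" by (simp add: dd_def power2_commute)

lemma norm2_vdiff: "length a = p \<Longrightarrow> length b = p \<Longrightarrow> norm2 (vdiff a b) = sqrt (dd p a b)"
  by (simp add: norm2_def vdiff_def dd_def)

lemma dd_L2: "sqrt (dd p a b) = L2_set (\<lambda>i. a ! i - b ! i) {..<p}"
  by (simp add: dd_def L2_set_def)

lemma F_eq: "length y = p \<Longrightarrow> length x = p \<Longrightarrow>
   slope_obj lam y x = dd p y x / 2 + (\<Sum>i<p. lam ! i * SA x ! i)"
  by (simp add: slope_obj_def norm2_vdiff dd_nonneg sorted_l1_eq)

lemma SA_nonneg: "i < length x \<Longrightarrow> 0 \<le> SA x ! i"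
proof -
  assume "i < length x"
  then have "SA x ! i \<in> set (SA x)" by simp
  then show ?thesis by (auto simp: SA_def)
qed

lemma J_nonneg: "\<forall>i<p. 0 \<le> lam ! i \<Longrightarrow> length x = p \<Longrightarrow> 0 \<le> (\<Sum>i<p. lam ! i * SA x ! i)"
  by (auto intro!: sum_nonneg simp: SA_nonneg)

lemma arith_strong:
  fixes A B C E t Jc Jx Jz :: real
  assumes "A = t*B + (1-t)*C - E" "Jc \<le> t*Jx + (1-t)*Jz"
  shows "A/2 + Jc \<le> t*(B/2 + Jx) + (1-t)*(C/2+Jz) - E/2"
  using assms by (simp add: field_simps) 
lemma arith_min:
  fixes a b D t :: real
  assumes "0 < t" "a \<le> t*b + (1-t)*a - t*(1-t)*D/2"
  shows "a + D/2 \<le> b + t*(D/2)"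
proof -
  have "t*(a + D/2) \<le> t*(b + t*(D/2))" using assms(2) by (simp add: field_simps)
  then show ?thesis using assms(1) by simp
qed

lemma F_strong:
  assumes "sorted lam" "length lam = p" "\<forall>i<p. 0 \<le> lam ! i"
    "length y = p" "length x = p" "length z = p" "0 \<le> t" "t \<le> 1"
  shows "slope_obj lam y (comb t x z) \<le> t * slope_obj lam y x + (1 - t) * slope_obj lam y z
          - t * (1 - t) * dd p x z / 2"
proof -
  have q: "dd p y (comb t x z) = t * dd p y x + (1 - t) * dd p y z - t * (1 - t) * dd p x z"
    unfolding dd_def using assms(5,6)
    by (simp add: sum_distrib_left sum_subtractf[symmetric] sum.distrib[symmetric])
       (rule sum.cong, simp, simp add: power2_eq_square algebra_simps)
  have j: "sorted_l1 lam (comb t x z) \<le> t * sorted_l1 lam x + (1 - t) * sorted_l1 lam z"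
    using J_convex assms by simp
  show ?thesis
    using arith_strong[OF q j] assms by (simp add: slope_obj_def norm2_vdiff dd_nonneg algebra_simps)
qed

lemma small_t:
  fixes a b c :: real
  assumes "c \<ge> 0" "\<And>t. 0 < t \<Longrightarrow> t \<le> 1 \<Longrightarrow> a \<le> b + t * c"
  shows "a \<le> b"
proof (rule field_le_epsilon)
  fix e :: real assume e: "0 < e"
  define t where "t = min 1 (e / (c + 1))"
  have t: "0 < t" "t \<le> 1" using e assms(1) by (auto simp: t_def)
  have "t \<le> e / (c + 1)" by (simp add: t_def)
  then have "t * c \<le> e / (c + 1) * c" using assms(1) by (rule mult_right_mono)
  also have "\<dots> \<le> e" using e assms(1) by (simp add: field_simps)
  finally show "a \<le> b + e" using assms(2)[OF t] by simp
qed

lemma min_ineq: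
  assumes "sorted lam" "length lam = p" "\<forall>i<p. 0 \<le> lam ! i"
    "length y = p" "length x = p" "length z = p"
    and min: "\<forall>w. length w = p \<longrightarrow> slope_obj lam y x \<le> slope_obj lam y w"
  shows "slope_obj lam y x + dd p z x / 2 \<le> slope_obj lam y z"
proof (rule small_t[of "dd p z x / 2"])
  show "0 \<le> dd p z x / 2" using dd_nonneg by simp
  fix t :: real assume t: "0 < t" "t \<le> 1"
  have "slope_obj lam y x \<le> slope_obj lam y (comb t z x)"
    using min assms by simp
  also have "\<dots> \<le> t * slope_obj lam y z + (1 - t) * slope_obj lam y x - t * (1 - t) * dd p z x / 2"
    using F_strong[OF assms(1-4,6,5)] t by simp
  finally show "slope_obj lam y x + dd p z x / 2 \<le> slope_obj lam y z + t * (dd p z x / 2)"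
    using arith_min t by blast
qed

lemma CS: "(\<Sum>i<p. f i * g i) \<le> L2_set f {..<p} * L2_set g {..<p}"
proof -
  have "(\<Sum>i<p. f i * g i) \<le> (\<Sum>i<p. \<bar>f i\<bar> * \<bar>g i\<bar>)"
    by (rule sum_mono) (simp add: abs_mult[symmetric])
  also have "\<dots> \<le> L2_set f {..<p} * L2_set g {..<p}" by (rule L2_set_mult_ineq)
  finally show ?thesis .
qed

lemma J_lip:
  assumes "length a = p" "length b = p"
  shows "(\<Sum>i<p. lam ! i * SA a ! i) - (\<Sum>i<p. lam ! i * SA b ! i)
     \<le> L2_set (\<lambda>i. lam ! i) {..<p} * sqrt (dd p a b)"
proof -
  have "(\<Sum>i<p. lam ! i * SA a ! i) - (\<Sum>i<p. lam ! i * SA b ! i)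
      = (\<Sum>i<p. lam ! i * (SA a ! i - SA b ! i))"
    by (simp add: sum_subtractf algebra_simps)
  also have "\<dots> \<le> L2_set (\<lambda>i. lam ! i) {..<p} * L2_set (\<lambda>i. SA a ! i - SA b ! i) {..<p}"
    by (rule CS)
  also have "L2_set (\<lambda>i. SA a ! i - SA b ! i) {..<p} \<le> sqrt (dd p a b)"
    using SA_nonexp[OF assms] by (simp add: L2_set_def dd_def)
  finally show ?thesis by (simp add: mult_left_mono L2_set_nonneg)
qed


lemma F_cont_bound:
  assumes "length y = p" "length a = p" "length b = p"
  shows "slope_obj lam y a \<le> slope_obj lam y b + sqrt (dd p y b) * sqrt (dd p b a) + dd p b a / 2
            + L2_set (\<lambda>i. lam ! i) {..<p} * sqrt (dd p b a)"
proof -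
  define q where "q = sqrt (dd p y b)"
  define e where "e = sqrt (dd p b a)"
  have q0: "0 \<le> q" and e0: "0 \<le> e" by (simp_all add: q_def e_def dd_nonneg)
  have "sqrt (dd p y a) = L2_set (\<lambda>i. (y ! i - b ! i) + (b ! i - a ! i)) {..<p}"
    by (simp add: dd_L2)
  also have "\<dots> \<le> q + e" unfolding q_def e_def dd_L2 by (rule L2_set_triangle_ineq)
  finally have tri: "sqrt (dd p y a) \<le> q + e" .
  have "dd p y a = (sqrt (dd p y a))^2" by (simp add: dd_nonneg)
  also have "\<dots> \<le> (q + e)^2" using tri by (intro power_mono) (auto simp: dd_nonneg)
  also have "\<dots> = dd p y b + 2 * (q * e) + dd p b a"
    by (simp add: q_def e_def power2_sum dd_nonneg)
  finally have sq: "dd p y a \<le> dd p y b + 2 * (q * e) + dd p b a" .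
  have jl: "(\<Sum>i<p. lam ! i * SA a ! i) - (\<Sum>i<p. lam ! i * SA b ! i)
     \<le> L2_set (\<lambda>i. lam ! i) {..<p} * e"
    using J_lip[OF assms(2,3), of lam] by (simp add: e_def dd_sym)
  show ?thesis using sq jl assms unfolding q_def[symmetric] e_def[symmetric]
    by (simp add: F_eq) 
qed

lemma F_nonneg: "\<forall>i<p. 0 \<le> lam ! i \<Longrightarrow> length y = p \<Longrightarrow> length x = p \<Longrightarrow> 0 \<le> slope_obj lam y x"
  using J_nonneg[of p lam x] dd_nonneg[of p y x] by (simp add: F_eq)

lemma seq_bound_tendsto:
  fixes m K :: real and p :: nat
  shows "(\<lambda>n. m + 1 / real (Suc n) + K * sqrt (8 * real p / real (Suc n)) + (8 * real p / real (Suc n)) / 2)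
          \<longlonglongrightarrow> m"
proof -
  have h: "(\<lambda>n. 1 / real (Suc n)) \<longlonglongrightarrow> 0"
    using LIMSEQ_Suc[OF lim_1_over_n] by simp
  have "(\<lambda>n. m + 1 / real (Suc n) + K * sqrt (8 * real p * (1 / real (Suc n))) + (8 * real p * (1 / real (Suc n))) / 2)
          \<longlonglongrightarrow> m + 0 + K * sqrt (8 * real p * 0) + (8 * real p * 0) / 2"
    by (intro tendsto_intros h) simp
  then show ?thesis by simp
qed


lemma exists_min:
  assumes lam: "sorted lam" "length lam = p" "\<forall>i<p. 0 \<le> lam ! i" and ly: "length y = p"
  shows "\<exists>x. length x = p \<and> (\<forall>z. length z = p \<longrightarrow> slope_obj lam y x \<le> slope_obj lam y z)"
proof -
  let ?F = "slope_obj lam y"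
  let ?A = "?F ` {z. length z = p}"
  define m where "m = Inf ?A"
  have ne: "?A \<noteq> {}" by (auto intro: exI[of _ "replicate p 0"])
  have bdd: "bdd_below ?A" using F_nonneg[OF lam(3) ly] by (auto simp: bdd_below_def)
  have mle: "\<And>z. length z = p \<Longrightarrow> m \<le> ?F z" unfolding m_def
    by (rule cInf_lower[OF _ bdd]) auto
  have m0: "0 \<le> m" unfolding m_def using ne F_nonneg[OF lam(3) ly]
    by (intro cInf_greatest) auto
  have "\<forall>n. \<exists>z. length z = p \<and> ?F z < m + 1 / real (Suc n)"
  proof
    fix n
    have "Inf ?A < m + 1 / real (Suc n)" by (simp add: m_def)
    from cInf_lessD[OF ne this] show "\<exists>z. length z = p \<and> ?F z < m + 1 / real (Suc n)" by auto
  qed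
  then obtain X where X: "\<And>n. length (X n) = p" "\<And>n. ?F (X n) < m + 1 / real (Suc n)"
    by metis
  have pair: "dd p (X n) (X k) \<le> 4 * (1 / real (Suc n) + 1 / real (Suc k))" for n k
  proof -
    have "m \<le> ?F (comb (1/2) (X n) (X k))" using X(1) by (intro mle) simp
    also have "\<dots> \<le> 1/2 * ?F (X n) + (1 - 1/2) * ?F (X k) - 1/2 * (1 - 1/2) * dd p (X n) (X k) / 2"
      by (rule F_strong[OF lam ly X(1) X(1)]) auto
    finally show ?thesis using X(2)[of n] X(2)[of k] by simp
  qed
  have pair2: "dd p (X n) (X k) \<le> 8 / real (Suc n)" if "n \<le> k" for n k
  proof -
    have "1 / real (Suc k) \<le> 1 / real (Suc n)" using that by (simp add: frac_le)
    then show ?thesis using pair[of n k] by simp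
  qed
  have coord: "(X n ! i - X k ! i)^2 \<le> dd p (X n) (X k)" if "i < p" for n k i
    unfolding dd_def using that by (intro member_le_sum) auto
  have cauchy: "Cauchy (\<lambda>n. X n ! i)" if i: "i < p" for i
  proof (rule CauchyI)
    fix e :: real assume e: "0 < e"
    obtain M :: nat where M: "8 / e^2 < real M" using reals_Archimedean2 by blast
    have M2: "8 / real (Suc M) < e^2"
    proof -
      have "8 < e^2 * real M" using M e by (simp add: field_simps)
      also have "\<dots> \<le> e^2 * real (Suc M)" using e by simp
      finally show ?thesis by (simp add: field_simps)
    qed
    show "\<exists>M. \<forall>m\<ge>M. \<forall>n\<ge>M. norm (X m ! i - X n ! i) < e"
    proof (intro exI allI impI)
      fix a b assume ab: "M \<le> a" "M \<le> b"
      have "(X a ! i - X b ! i)^2 \<le> 4 * (1 / real (Suc a) + 1 / real (Suc b))"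
        using coord[OF i, of a b] pair[of a b] by linarith
      also have "\<dots> \<le> 4 * (1 / real (Suc M) + 1 / real (Suc M))"
        using ab by (intro mult_left_mono add_mono) (simp_all add: frac_le)
      also have "\<dots> = 8 / real (Suc M)" by simp
      also have "\<dots> < e^2" by (rule M2)
      finally have "\<bar>X a ! i - X b ! i\<bar>^2 < e^2" by simp
      then have "\<bar>X a ! i - X b ! i\<bar> < e" by (rule power_less_imp_less_base) (use e in simp)
      then show "norm (X a ! i - X b ! i) < e" by simp
    qed
  qed
  define L where "L i = lim (\<lambda>n. X n ! i)" for i
  have conv: "(\<lambda>n. X n ! i) \<longlonglongrightarrow> L i" if "i < p" for i
    using cauchy[OF that] unfolding L_def Cauchy_convergent_iff convergent_LIMSEQ_iff .
  define x where "x = map L [0..<p]"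
  have lx: "length x = p" by (simp add: x_def)
  have xn: "i < p \<Longrightarrow> x ! i = L i" for i by (simp add: x_def)
  have cb: "(X n ! i - x ! i)^2 \<le> 8 / real (Suc n)" if i: "i < p" for n i
  proof (rule LIMSEQ_le_const2)
    show "(\<lambda>k. (X n ! i - X k ! i)^2) \<longlonglongrightarrow> (X n ! i - x ! i)^2"
      using xn[OF i] conv[OF i] by (intro tendsto_intros) simp
    show "\<exists>N. \<forall>k\<ge>N. (X n ! i - X k ! i)^2 \<le> 8 / real (Suc n)"
      using coord[OF i] pair2 by (meson order_trans)
  qed
  have dxn: "dd p (X n) x \<le> 8 * real p / real (Suc n)" for n
  proof -
    have "dd p (X n) x \<le> real (card {..<p}) * (8 / real (Suc n))"
      unfolding dd_def by (rule sum_bounded_above) (use cb in auto)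
    then show ?thesis by (simp add: mult.commute)
  qed
  define Q where "Q = sqrt (2 * (m + 1))"
  define Lam where "Lam = L2_set (\<lambda>i. lam ! i) {..<p}"
  have Lam0: "0 \<le> Lam" by (simp add: Lam_def L2_set_nonneg)
  have bnd: "?F x \<le> m + 1 / real (Suc n) + (Q + Lam) * sqrt (8 * real p / real (Suc n))
               + (8 * real p / real (Suc n)) / 2" for n
  proof -
    define E where "E = sqrt (8 * real p / real (Suc n))"
    define e where "e = sqrt (dd p (X n) x)"
    define q where "q = sqrt (dd p y (X n))"
    have e0: "0 \<le> e" by (simp add: e_def dd_nonneg)
    have eE: "e \<le> E" unfolding e_def E_def using dxn by simp
    have dq: "dd p y (X n) \<le> 2 * (m + 1)"
    proof -
      have "1 / real (Suc n) \<le> 1" by simp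
      then have "?F (X n) < m + 1" using X(2)[of n] by linarith
      moreover have "dd p y (X n) / 2 \<le> ?F (X n)"
        using J_nonneg[OF lam(3) X(1)] by (simp add: F_eq ly X(1))
      ultimately show ?thesis by simp
    qed
    have qQ: "q \<le> Q" unfolding q_def Q_def using dq by simp
    have q0: "0 \<le> q" by (simp add: q_def dd_nonneg)
    have "?F x \<le> ?F (X n) + q * e + dd p (X n) x / 2 + Lam * e"
      using F_cont_bound[OF ly lx X(1), of lam] by (simp add: q_def e_def Lam_def)
    also have "q * e \<le> Q * E" using qQ eE q0 e0 by (intro mult_mono) auto
    also have "Lam * e \<le> Lam * E" using Lam0 eE by (intro mult_left_mono)
    also have "dd p (X n) x \<le> 8 * real p / real (Suc n)" by (rule dxn)
    finally have "?F x \<le> ?F (X n) + Q * E + 8 * real p / real (Suc n) / 2 + Lam * E" by simp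
    then show ?thesis using X(2)[of n] unfolding E_def[symmetric] distrib_right by linarith
  qed
  have "?F x \<le> m"
  proof (rule LIMSEQ_le_const[OF seq_bound_tendsto[of m "Q + Lam" p]])
    show "\<exists>N. \<forall>n\<ge>N. ?F x \<le> m + 1 / real (Suc n) + (Q + Lam) * sqrt (8 * real p / real (Suc n))
               + (8 * real p / real (Suc n)) / 2" using bnd by blast
  qed
  then have "\<forall>z. length z = p \<longrightarrow> ?F x \<le> ?F z" using mle by (blast intro: order_trans)
  then show ?thesis using lx by blast
qed


lemma dd_zero: "length a = p \<Longrightarrow> length b = p \<Longrightarrow> dd p a b \<le> 0 \<Longrightarrow> a = b"
proof -
  assume l: "length a = p" "length b = p" and d: "dd p a b \<le> 0"
  have "dd p a b = 0" using d dd_nonneg[of p a b] by linarith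
  then have "\<forall>i\<in>{..<p}. (a ! i - b ! i)^2 = 0" unfolding dd_def
    by (subst sum_nonneg_eq_0_iff[symmetric]) auto
  then show "a = b" using l by (intro nth_equalityI) auto
qed

lemma Prox_min:
  assumes lam: "sorted lam" "length lam = p" "\<forall>i<p. 0 \<le> lam ! i" and ly: "length y = p"
  shows "length (Prox lam y) = p \<and> (\<forall>z. length z = p \<longrightarrow> slope_obj lam y (Prox lam y) \<le> slope_obj lam y z)"
proof -
  let ?P = "\<lambda>x. length x = length y \<and> (\<forall>z. length z = length y \<longrightarrow> slope_obj lam y x \<le> slope_obj lam y z)"
  obtain x where x: "length x = p" "\<forall>z. length z = p \<longrightarrow> slope_obj lam y x \<le> slope_obj lam y z"
    using exists_min[OF lam ly] by blast
  have Px: "?P x" using x ly by simp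
  have uniq: "x' = x" if "?P x'" for x'
  proof -
    have l': "length x' = p" using that ly by simp
    have a: "slope_obj lam y x + dd p x' x / 2 \<le> slope_obj lam y x'"
      by (rule min_ineq[OF lam ly x(1) l' x(2)])
    have b: "slope_obj lam y x' \<le> slope_obj lam y x" using that x(1) ly by simp
    have "dd p x' x \<le> 0" using a b by linarith
    then show ?thesis by (rule dd_zero[OF l' x(1)])
  qed
  have "?P (THE x. ?P x)" by (rule theI[of ?P x, OF Px uniq])
  then show ?thesis using ly unfolding Prox_def by simp
qed

theorem lemma19:
  fixes p :: nat and y1 y2 lam1 lam2 :: "real list"
  assumes "length y1 = p" and "length y2 = p"
    and "length lam1 = p" and "length lam2 = p"
    and "\<forall>i<p. 0 \<le> lam1 ! i" and "sorted lam1"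
    and "\<forall>i<p. 0 \<le> lam2 ! i" and "sorted lam2"
  shows "norm2 (vdiff (Prox lam1 y1) (Prox lam2 y2))
           \<le> 2 * (norm2 (vdiff lam1 lam2) + norm2 (vdiff y1 y2))"
proof -
  define x1 where "x1 = Prox lam1 y1"
  define x2 where "x2 = Prox lam2 y2"
  have P1: "length x1 = p" "\<forall>z. length z = p \<longrightarrow> slope_obj lam1 y1 x1 \<le> slope_obj lam1 y1 z"
    using Prox_min[OF assms(6,3,5,1)] by (simp_all add: x1_def)
  have P2: "length x2 = p" "\<forall>z. length z = p \<longrightarrow> slope_obj lam2 y2 x2 \<le> slope_obj lam2 y2 z"
    using Prox_min[OF assms(8,4,7,2)] by (simp_all add: x2_def)
  define D where "D = dd p x1 x2"
  define A where "A = sqrt (dd p y1 y2)"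
  define B where "B = sqrt (dd p lam1 lam2)"
  have m1: "slope_obj lam1 y1 x1 + dd p x2 x1 / 2 \<le> slope_obj lam1 y1 x2"
    by (rule min_ineq[OF assms(6,3,5,1) P1(1) P2(1) P1(2)])
  have m2: "slope_obj lam2 y2 x2 + dd p x1 x2 / 2 \<le> slope_obj lam2 y2 x1"
    by (rule min_ineq[OF assms(8,4,7,2) P2(1) P1(1) P2(2)])
  have qid: "dd p y1 x2 - dd p y2 x2 + dd p y2 x1 - dd p y1 x1
       = 2 * (\<Sum>i<p. (y1 ! i - y2 ! i) * (x1 ! i - x2 ! i))"
    unfolding dd_def sum_distrib_left sum_subtractf[symmetric] sum.distrib[symmetric]
    by (rule sum.cong) (simp_all add: power2_eq_square algebra_simps)
  have jid: "(\<Sum>i<p. lam1 ! i * SA x2 ! i) - (\<Sum>i<p. lam2 ! i * SA x2 ! i)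
      + (\<Sum>i<p. lam2 ! i * SA x1 ! i) - (\<Sum>i<p. lam1 ! i * SA x1 ! i)
      = (\<Sum>i<p. (lam1 ! i - lam2 ! i) * (SA x2 ! i - SA x1 ! i))"
    unfolding sum_subtractf[symmetric] sum.distrib[symmetric]
    by (rule sum.cong) (simp_all add: algebra_simps)
  have c1: "(\<Sum>i<p. (y1 ! i - y2 ! i) * (x1 ! i - x2 ! i)) \<le> A * sqrt D"
    using CS[of "\<lambda>i. y1 ! i - y2 ! i" "\<lambda>i. x1 ! i - x2 ! i" p]
    by (simp add: A_def D_def dd_L2)
  have "(\<Sum>i<p. (lam1 ! i - lam2 ! i) * (SA x2 ! i - SA x1 ! i))
        \<le> B * L2_set (\<lambda>i. SA x2 ! i - SA x1 ! i) {..<p}"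
    using CS[of "\<lambda>i. lam1 ! i - lam2 ! i" "\<lambda>i. SA x2 ! i - SA x1 ! i" p]
    by (simp add: B_def dd_L2)
  also have "L2_set (\<lambda>i. SA x2 ! i - SA x1 ! i) {..<p} \<le> sqrt D"
  proof -
    have "(\<Sum>i<p. (SA x2 ! i - SA x1 ! i)^2) \<le> dd p x2 x1"
      using SA_nonexp[OF P2(1) P1(1)] by (simp add: dd_def)
    then show ?thesis using dd_sym[of p x2 x1] by (simp add: L2_set_def D_def)
  qed
  then have "B * L2_set (\<lambda>i. SA x2 ! i - SA x1 ! i) {..<p} \<le> B * sqrt D"
    by (intro mult_left_mono) (simp_all add: B_def dd_nonneg)
  finally have c2: "(\<Sum>i<p. (lam1 ! i - lam2 ! i) * (SA x2 ! i - SA x1 ! i)) \<le> B * sqrt D" .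
  have "D \<le> (slope_obj lam1 y1 x2 - slope_obj lam2 y2 x2) + (slope_obj lam2 y2 x1 - slope_obj lam1 y1 x1)"
    using m1 m2 by (simp add: D_def dd_sym[of p x2 x1])
  also have "\<dots> = (dd p y1 x2 - dd p y2 x2 + dd p y2 x1 - dd p y1 x1) / 2
      + ((\<Sum>i<p. lam1 ! i * SA x2 ! i) - (\<Sum>i<p. lam2 ! i * SA x2 ! i)
      + (\<Sum>i<p. lam2 ! i * SA x1 ! i) - (\<Sum>i<p. lam1 ! i * SA x1 ! i))"
    using F_eq[OF assms(1) P1(1), of lam1] F_eq[OF assms(1) P2(1), of lam1]
      F_eq[OF assms(2) P1(1), of lam2] F_eq[OF assms(2) P2(1), of lam2] unfolding add_divide_distrib diff_divide_distrib by linarith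
  also have "\<dots> \<le> A * sqrt D + B * sqrt D" unfolding qid jid using c1 c2 by simp
  finally have DD: "D \<le> (A + B) * sqrt D" by (simp add: distrib_right)
  have D0: "0 \<le> D" by (simp add: D_def dd_nonneg)
  have sD: "sqrt D \<le> A + B"
  proof (cases "sqrt D = 0")
    case True
    then show ?thesis by (simp add: A_def B_def dd_nonneg)
  next
    case False
    then have pos: "0 < sqrt D" using D0 by simp
    have "sqrt D * sqrt D \<le> (A + B) * sqrt D" using DD D0 by simp
    from mult_right_le_imp_le[OF this pos] show ?thesis .
  qed
  have A0: "0 \<le> A" and B0: "0 \<le> B" by (simp_all add: A_def B_def dd_nonneg)
  have "norm2 (vdiff x1 x2) = sqrt D" using P1(1) P2(1) by (simp add: norm2_vdiff D_def)
  moreover have "norm2 (vdiff lam1 lam2) = B" using assms by (simp add: norm2_vdiff B_def)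
  moreover have "norm2 (vdiff y1 y2) = A" using assms by (simp add: norm2_vdiff A_def)
  ultimately show ?thesis using sD A0 B0 unfolding x1_def x2_def by (smt (verit))
qed

end
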